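(* Let $n\geq 1$ be an integer and let $a,b\in\mathbb{C}$. Then $$C_n^{(a,b)}=a\,M_{n-1}^{(a+b,\,ab)},\qquad b\,S_n^{(a,b)}=(a+b)\,C_n^{(b,\,a+b)},\qquad S_n^{(a,b)}=(a+b)\,M_{n-1}^{(a+2b,\,ab+b^2)},$$ where $C_n^{(a,b)}$, $S_n^{(a,b)}$, $M_m^{(a,b)}$ are the weighted Catalan, Schröder and Motzkin numbers defined in the context.
   Context: Let $C_k=\frac{1}{k+1}\binom{2k}{k}$ be the Catalan numbers. For $m\geq 0$ and $a,b\in\mathbb{C}$: (1) The $(a,b)$-Motzkin number is $M_m^{(a,b)}=\sum_{k=0}^{\lfloor m/2\rfloor}\binom{m}{2k}C_k a^{m-2k}b^k$ (total weight of Motzkin paths of order $m$ with steps $(0,2),(2,0),(1,1)$ staying weakly above $y=x$, each $(1,1)$ step weighted $a$ and each $(2,0)$ step weighted $b$). (2) For $n\geq 1$, the valley type $(a,b)$-Catalan number is $C_n^{(a,b)}=\sum_{k=0}^{n-1}\frac{1}{n}\binom{n}{k}\binom{n}{k+1}a^{n-k}b^k$ (total weight of Catalan paths from $(0,0)$ to $(n,n)$ with steps $\mathbf N=(0,1)$, $\mathbf E=(1,0)$ never going below $y=x$, where each $\mathbf E$ step immediately followed by an $\mathbf N$ step has weight $b$ and every other $\mathbf E$ step has weight $a$). (3) The $(a,b)$-Schröder number is $S_n^{(a,b)}=\sum_{k=0}^{n}\binom{n+k}{2k}C_k a^{n-k}b^k$ (total weight of Schröder paths from $(0,0)$ to $(n,n)$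 with steps $(0,1),(1,0),(1,1)$ never going below $y=x$, each $(1,1)$ step weighted $a$ and each $(1,0)$ step weighted $b$). *)

theory Defs
  imports Complex_Main
begin

definition catalan :: "nat \<Rightarrow> nat" where
  "catalan k = ((2*k) choose k) div (k+1)"

definition motzkin_ab :: "complex \<Rightarrow> complex \<Rightarrow> nat \<Rightarrow> complex" where
  "motzkin_ab a b m = (\<Sum>k=0..m div 2. of_nat (m choose (2*k)) * of_nat (catalan k) * a^(m - 2*k) * b^k)"

definition catalan_ab :: "complex \<Rightarrow> complex \<Rightarrow> nat \<Rightarrow> complex" where
  "catalan_ab a b n = (\<Sum>k=0..n-1. (1 / of_nat n) * of_nat (n choose k) * of_nat (n choose (k+1)) * a^(n-k) * b^k)"

definition schroder_ab :: "complex \<Rightarrow> complex \<Rightarrow> nat \<Rightarrow> complex" where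
  "schroder_ab a b n = (\<Sum>k=0..n. of_nat ((n+k) choose (2*k)) * of_nat (catalan k) * a^(n-k) * b^k)"

end

theory Submission
  imports Defs
begin

lemma H1: "(\<Sum>k\<le>p. (p choose k) * (q choose Suc k)) = (p + q) choose Suc p"
proof -
  have "(p + q) choose Suc p = (\<Sum>i\<le>Suc p. (p choose i) * (q choose (Suc p - i)))"
    by (rule vandermonde[symmetric])
  also have "\<dots> = (\<Sum>i\<le>p. (p choose i) * (q choose (Suc p - i)))"
    by simp
  also have "\<dots> = (\<Sum>i=0..p. (p choose i) * (q choose (Suc p - i)))"
    by (simp add: atMost_atLeast0)
  also have "\<dots> = (\<Sum>i=0..p. (p choose (p - i)) * (q choose (Suc p - (p - i))))"
    by (subst sum.atLeastAtMost_rev) simp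
  also have "\<dots> = (\<Sum>i=0..p. (p choose i) * (q choose Suc i))"
    by (rule sum.cong) (auto simp: binomial_symmetric[symmetric] Suc_diff_le)
  finally show ?thesis by (simp add: atMost_atLeast0)
qed

lemma H2: "Suc j * catalan j = (2*j) choose j"
proof -
  have e: "Suc j * ((2*j) choose Suc j) = j * ((2*j) choose j)"
  proof -
    have e1: "Suc j * ((2*j) choose Suc j) = (2*j) * ((2*j - 1) choose j)" by (rule binomial_absorption)
    have e2: "(2*j - j) * ((2*j) choose j) = (2*j) * ((2*j - 1) choose j)" by (rule binomial_absorb_comp)
    have "2*j - j = j" by simp
    with e1 e2 show ?thesis by metis
  qed
  have "(2*j) choose j = Suc j * (((2*j) choose j) - ((2*j) choose Suc j))"
    using e by (simp add: right_diff_distrib')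
  hence "Suc j dvd ((2*j) choose j)" by (metis dvd_triv_left)
  thus ?thesis unfolding catalan_def by (metis Suc_eq_plus1 dvd_mult_div_cancel)
qed

lemma LA_term:
  assumes "j \<le> k" "j + k \<le> N"
  shows "Suc (N-k) * ((N choose (2*j)) * catalan j * ((N - 2*j) choose (k - j)))
         = (N choose k) * (k choose j) * ((Suc N - k) choose Suc j)"
proof -
  have c1: "(N choose (2*j)) * ((2*j) choose j) = (N choose j) * ((N-j) choose j)"
    using choose_mult[of j "2*j" N] assms by simp
  have c2: "((N-j) choose k) * (k choose j) = ((N-j) choose j) * ((N - 2*j) choose (k-j))"
    using choose_mult[of j k "N-j"] assms by (simp add: diff_diff_add mult_2)
  have c3: "(N choose (j+k)) * ((j+k) choose j) = (N choose j) * ((N-j) choose k)"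
    using choose_mult[of j "j+k" N] assms by simp
  have c4: "(N choose (j+k)) * ((j+k) choose k) = (N choose k) * ((N-k) choose j)"
    using choose_mult[of k "j+k" N] assms by simp
  have c5: "((j+k) choose j) = ((j+k) choose k)"
    using binomial_symmetric[of j "j+k"] by simp
  have c6: "Suc j * (Suc (N-k) choose Suc j) = Suc (N-k) * ((N-k) choose j)"
    by (rule Suc_times_binomial)
  have s: "Suc N - k = Suc (N - k)" using assms by simp
  have "Suc j * (Suc (N-k) * ((N choose (2*j)) * catalan j * ((N - 2*j) choose (k - j))))
      = Suc (N-k) * ((N choose (2*j)) * (Suc j * catalan j) * ((N - 2*j) choose (k - j)))"
    by (simp only: mult_ac)
  also have "\<dots> = Suc (N-k) * ((N choose (2*j)) * ((2*j) choose j) * ((N - 2*j) choose (k - j)))"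
    by (simp only: H2)
  also have "\<dots> = Suc (N-k) * ((N choose j) * (((N-j) choose j) * ((N - 2*j) choose (k - j))))"
    by (simp only: c1 mult.assoc)
  also have "\<dots> = Suc (N-k) * ((N choose j) * ((N-j) choose k) * (k choose j))"
    by (simp only: c2[symmetric] mult.assoc)
  also have "\<dots> = Suc (N-k) * ((N choose k) * ((N-k) choose j) * (k choose j))"
    using c3 c4 c5 by simp
  also have "\<dots> = Suc j * ((N choose k) * (k choose j) * ((Suc N - k) choose Suc j))"
    unfolding s using c6 by (metis (no_types, lifting) mult.assoc mult.commute mult.left_commute)
  finally show ?thesis by (metis mult_left_cancel nat.distinct(1))
qed

lemma LA:
  assumes "k \<le> N"
  shows "Suc N * (\<Sum>j\<in>{j. j \<in> {0..N div 2} \<and> j \<le> k \<and> k \<le> N - j}.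
            (N choose (2*j)) * catalan j * ((N - 2*j) choose (k - j)))
         = (Suc N choose k) * (Suc N choose Suc k)"
proof -
  define J where "J = {j. j \<in> {0..N div 2} \<and> j \<le> k \<and> k \<le> N - j}"
  have J: "J = {0..min k (N-k)}" using assms unfolding J_def by auto
  have "Suc (N-k) * (\<Sum>j\<in>J. (N choose (2*j)) * catalan j * ((N - 2*j) choose (k - j)))
      = (\<Sum>j\<in>J. (N choose k) * ((k choose j) * ((Suc N - k) choose Suc j)))"
    unfolding sum_distrib_left
  proof (rule sum.cong)
    fix j assume "j \<in> J"
    hence "j \<le> k" "j + k \<le> N" using assms by (auto simp: J)
    from LA_term[OF this] show "Suc (N-k) * ((N choose (2*j)) * catalan j * ((N - 2*j) choose (k - j)))
        = (N choose k) * ((k choose j) * ((Suc N - k) choose Suc j))" by (simp only: mult.assoc)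
  qed simp
  also have "\<dots> = (N choose k) * (\<Sum>j\<in>J. (k choose j) * ((Suc N - k) choose Suc j))"
    by (simp add: sum_distrib_left)
  also have "(\<Sum>j\<in>J. (k choose j) * ((Suc N - k) choose Suc j)) = (\<Sum>j\<le>k. (k choose j) * ((Suc N - k) choose Suc j))"
  proof (rule sum.mono_neutral_left)
    show "finite {..k}" by simp
    show "J \<subseteq> {..k}" by (auto simp: J)
    show "\<forall>i\<in>{..k} - J. (k choose i) * ((Suc N - k) choose Suc i) = 0"
    proof
      fix i assume "i \<in> {..k} - J"
      hence "Suc N - k < Suc i" using assms by (auto simp: J)
      thus "(k choose i) * ((Suc N - k) choose Suc i) = 0" by (simp add: binomial_eq_0)
    qed
  qed
  also have "\<dots> = (Suc N choose Suc k)"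
    using H1[of k "Suc N - k"] assms by simp
  finally have e: "Suc (N-k) * (\<Sum>j\<in>J. (N choose (2*j)) * catalan j * ((N - 2*j) choose (k - j)))
      = (N choose k) * (Suc N choose Suc k)" .
  have b: "(Suc N - k) * (Suc N choose k) = Suc N * (N choose k)"
    using binomial_absorb_comp[of "Suc N" k] by simp
  have s: "Suc N - k = Suc (N - k)" using assms by simp
  have "Suc (N-k) * (Suc N * (\<Sum>j\<in>J. (N choose (2*j)) * catalan j * ((N - 2*j) choose (k - j))))
       = Suc (N-k) * ((Suc N choose k) * (Suc N choose Suc k))"
  proof -
    define X where "X = (\<Sum>j\<in>J. (N choose (2*j)) * catalan j * ((N - 2*j) choose (k - j)))"
    have "Suc (N-k) * (Suc N * X) = Suc N * (Suc (N-k) * X)" by (simp only: mult_ac)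
    also have "\<dots> = Suc N * (N choose k) * (Suc N choose Suc k)" using e unfolding X_def by (simp only: mult.assoc)
    also have "\<dots> = (Suc N - k) * (Suc N choose k) * (Suc N choose Suc k)" by (simp only: b)
    finally show ?thesis unfolding s X_def by (simp only: mult.assoc)
  qed
  hence "Suc N * (\<Sum>j\<in>J. (N choose (2*j)) * catalan j * ((N - 2*j) choose (k - j))) = (Suc N choose k) * (Suc N choose Suc k)" by (rule mult_left_cancel[THEN iffD1, rotated]) simp
  thus ?thesis unfolding J_def .
qed

lemma LB_closed:
  fixes n m :: nat assumes "m \<le> n"
  shows "(n choose m) * ((m + n) choose Suc m) = n * ((n + m) choose (2*m)) * catalan m"
proof -
  have e1: "Suc m * ((m+n) choose Suc m) = (m+n) * ((m+n-1) choose m)" by (rule binomial_absorption)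
  have e2: "(m+n-m) * ((m+n) choose m) = (m+n) * ((m+n-1) choose m)" by (rule binomial_absorb_comp)
  have e3: "Suc m * ((m+n) choose Suc m) = n * ((n+m) choose m)"
    using e1 e2 by (simp add: add.commute)
  have e4: "((n+m) choose (2*m)) * ((2*m) choose m) = ((n+m) choose m) * (n choose m)"
    using choose_mult[of m "2*m" "n+m"] assms by simp
  have "Suc m * ((n choose m) * ((m + n) choose Suc m)) = (n choose m) * (n * ((n+m) choose m))"
    using e3 by (metis mult.left_commute)
  also have "\<dots> = n * (((n+m) choose (2*m)) * ((2*m) choose m))"
    using e4 by (simp only: mult_ac)
  also have "\<dots> = Suc m * (n * ((n + m) choose (2*m)) * catalan m)"
    unfolding H2[of m, symmetric] by (simp only: mult_ac)
  finally show ?thesis by (rule mult_left_cancel[THEN iffD1, rotated]) simp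
qed

lemma LB:
  assumes "m \<le> Suc N"
  shows "(\<Sum>k\<in>{k. k \<in> {0..N} \<and> k \<le> m}. (Suc N choose k) * (Suc N choose Suc k) * ((Suc N - k) choose (m - k)))
       = Suc N * ((Suc N + m) choose (2*m)) * catalan m"
proof -
  define n where "n = Suc N"
  define K where "K = {k. k \<in> {0..N} \<and> k \<le> m}"
  have "(\<Sum>k\<in>K. (n choose k) * (n choose Suc k) * ((n - k) choose (m - k)))
      = (\<Sum>k\<in>K. (n choose m) * ((m choose k) * (n choose Suc k)))"
  proof (rule sum.cong)
    fix k assume "k \<in> K"
    hence "k \<le> m" unfolding K_def by simp
    from choose_mult[OF this, of n] assms
    have "(n choose m) * (m choose k) = (n choose k) * ((n - k) choose (m - k))" by (simp add: n_def)
    thus "(n choose k) * (n choose Suc k) * ((n - k) choose (m - k)) = (n choose m) * ((m choose k) * (n choose Suc k))"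
      by (metis mult.assoc mult.commute)
  qed simp
  also have "\<dots> = (n choose m) * (\<Sum>k\<in>K. (m choose k) * (n choose Suc k))"
    by (simp add: sum_distrib_left)
  also have "(\<Sum>k\<in>K. (m choose k) * (n choose Suc k)) = (\<Sum>k\<le>m. (m choose k) * (n choose Suc k))"
  proof (rule sum.mono_neutral_left)
    show "finite {..m}" by simp
    show "K \<subseteq> {..m}" by (auto simp: K_def)
    show "\<forall>i\<in>{..m} - K. (m choose i) * (n choose Suc i) = 0"
    proof
      fix i assume "i \<in> {..m} - K"
      hence "n < Suc i" by (auto simp: K_def n_def)
      thus "(m choose i) * (n choose Suc i) = 0" by (simp add: binomial_eq_0)
    qed
  qed
  also have "\<dots> = (m + n) choose Suc m" by (rule H1)
  also have "(n choose m) * ((m + n) choose Suc m) = n * ((n + m) choose (2*m)) * catalan m"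
    by (rule LB_closed) (use assms n_def in simp)
  finally show ?thesis unfolding n_def K_def .
qed

lemma ThA: "catalan_ab a b (Suc N) = a * motzkin_ab (a+b) (a*b) N"
proof -
  define t where "t j k = of_nat ((N choose (2*j)) * catalan j * ((N - 2*j) choose (k - j))) * a^(Suc N - k) * b^k" for j k
  have step1: "a * (of_nat (N choose (2*j)) * of_nat (catalan j) * (a+b)^(N - 2*j) * (a*b)^j)
      = (\<Sum>k\<in>{k. k \<in> {0..N} \<and> j \<le> k \<and> k \<le> N - j}. t j k)" if j: "j \<in> {0..N div 2}" for j
  proof -
    define p where "p = N - 2*j"
    have jN: "2*j \<le> N" using j by auto
    have "(a+b)^p = (\<Sum>i\<le>p. of_nat (p choose i) * b^i * a^(p-i))"
      using binomial_ring[of b a p] by (simp add: add.commute)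
    hence "a * (of_nat (N choose (2*j)) * of_nat (catalan j) * (a+b)^p * (a*b)^j)
        = (\<Sum>i\<le>p. a * (of_nat (N choose (2*j)) * of_nat (catalan j) * (of_nat (p choose i) * b^i * a^(p-i)) * (a*b)^j))"
      by (simp add: sum_distrib_left sum_distrib_right)
    also have "\<dots> = (\<Sum>i\<le>p. t j (i+j))"
    proof (rule sum.cong)
      fix i assume "i \<in> {..p}"
      hence ip: "i \<le> p" by simp
      have ex: "Suc N - (i+j) = Suc ((p - i) + j)" using ip jN p_def by arith
      have ex2: "i + j - j = i" by simp
      show "a * (of_nat (N choose (2*j)) * of_nat (catalan j) * (of_nat (p choose i) * b^i * a^(p-i)) * (a*b)^j) = t j (i+j)"
        unfolding t_def ex ex2 p_def[symmetric] by (simp add: power_add power_mult_distrib ac_simps)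
    qed simp
    also have "\<dots> = (\<Sum>k\<in>{0+j..p+j}. t j k)"
      by (subst sum.shift_bounds_cl_nat_ivl) (simp add: atMost_atLeast0)
    also have "{0+j..p+j} = {k. k \<in> {0..N} \<and> j \<le> k \<and> k \<le> N - j}"
      using jN p_def by auto
    finally show ?thesis unfolding p_def .
  qed
  have "a * motzkin_ab (a+b) (a*b) N
      = (\<Sum>j\<in>{0..N div 2}. \<Sum>k\<in>{k. k \<in> {0..N} \<and> j \<le> k \<and> k \<le> N - j}. t j k)"
    unfolding motzkin_ab_def sum_distrib_left
    by (rule sum.cong) (simp_all add: step1)
  also have "\<dots> = (\<Sum>k\<in>{0..N}. \<Sum>j\<in>{j. j \<in> {0..N div 2} \<and> j \<le> k \<and> k \<le> N - j}. t j k)"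
    by (rule sum.swap_restrict) simp_all
  also have "\<dots> = (\<Sum>k\<in>{0..N}. (1 / of_nat (Suc N)) * of_nat (Suc N choose k) * of_nat (Suc N choose (k+1)) * a^(Suc N - k) * b^k)"
  proof (rule sum.cong)
    fix k assume "k \<in> {0..N}"
    hence kN: "k \<le> N" by simp
    define S where "S = (\<Sum>j\<in>{j. j \<in> {0..N div 2} \<and> j \<le> k \<and> k \<le> N - j}.
            (N choose (2*j)) * catalan j * ((N - 2*j) choose (k - j)))"
    have L: "Suc N * S = (Suc N choose k) * (Suc N choose Suc k)" unfolding S_def by (rule LA[OF kN])
    have "(of_nat (Suc N) :: complex) * of_nat S = of_nat (Suc N choose k) * of_nat (Suc N choose Suc k)"
      using arg_cong[OF L, of "of_nat :: nat \<Rightarrow> complex"] by (simp only: of_nat_mult)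
    then have L': "(of_nat S :: complex) = (1 / of_nat (Suc N)) * of_nat (Suc N choose k) * of_nat (Suc N choose Suc k)"
    proof -
      assume h: "(of_nat (Suc N) :: complex) * of_nat S = of_nat (Suc N choose k) * of_nat (Suc N choose Suc k)"
      have nz: "(of_nat (Suc N) :: complex) \<noteq> 0" by (rule of_nat_neq_0)
      have "(of_nat S :: complex) = (of_nat (Suc N) * of_nat S) / of_nat (Suc N)" using nz by simp
      also have "\<dots> = (of_nat (Suc N choose k) * of_nat (Suc N choose Suc k)) / of_nat (Suc N)" by (simp only: h)
      finally show ?thesis by (simp only: divide_inverse mult.commute mult.left_commute mult_1_left)
    qed
    have "(\<Sum>j\<in>{j. j \<in> {0..N div 2} \<and> j \<le> k \<and> k \<le> N - j}. t j k) = of_nat S * a^(Suc N - k) * b^k"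
      unfolding t_def S_def of_nat_sum by (simp add: sum_distrib_right)
    thus "(\<Sum>j\<in>{j. j \<in> {0..N div 2} \<and> j \<le> k \<and> k \<le> N - j}. t j k) = (1 / of_nat (Suc N)) * of_nat (Suc N choose k) * of_nat (Suc N choose (k+1)) * a^(Suc N - k) * b^k"
      using L' by simp
  qed simp
  also have "\<dots> = catalan_ab a b (Suc N)" unfolding catalan_ab_def by simp
  finally show ?thesis by simp
qed

lemma ThB: "schroder_ab a b (Suc N) = catalan_ab (a+b) b (Suc N)"
proof -
  define n where "n = Suc N"
  define u where "u k m = (1 / of_nat n) * of_nat ((n choose k) * (n choose Suc k) * ((n - k) choose (m - k))) * a^(n - m) * b^m" for k m
  have step1: "(1 / of_nat n) * of_nat (n choose k) * of_nat (n choose (k+1)) * (a+b)^(n-k) * b^k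
      = (\<Sum>m\<in>{m. m \<in> {0..n} \<and> k \<le> m}. u k m)" if k: "k \<in> {0..N}" for k
  proof -
    define p where "p = n - k"
    have "(a+b)^p = (\<Sum>i\<le>p. of_nat (p choose i) * b^i * a^(p-i))"
      using binomial_ring[of b a p] by (simp add: add.commute)
    hence "(1 / of_nat n) * of_nat (n choose k) * of_nat (n choose (k+1)) * (a+b)^p * b^k
        = (\<Sum>i\<le>p. (1 / of_nat n) * of_nat (n choose k) * of_nat (n choose (k+1)) * (of_nat (p choose i) * b^i * a^(p-i)) * b^k)"
      by (simp add: sum_distrib_left sum_distrib_right)
    also have "\<dots> = (\<Sum>i\<le>p. u k (i+k))"
    proof (rule sum.cong)
      fix i assume "i \<in> {..p}"
      hence ip: "i \<le> p" by simp
      have ex: "n - (i+k) = p - i" using ip p_def by arith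
      have ex2: "i + k - k = i" by simp
      show "(1 / of_nat n) * of_nat (n choose k) * of_nat (n choose (k+1)) * (of_nat (p choose i) * b^i * a^(p-i)) * b^k = u k (i+k)"
        unfolding u_def ex ex2 p_def[symmetric] by (simp add: power_add ac_simps)
    qed simp
    also have "\<dots> = (\<Sum>m\<in>{0+k..p+k}. u k m)"
      by (subst sum.shift_bounds_cl_nat_ivl) (simp add: atMost_atLeast0)
    also have "{0+k..p+k} = {m. m \<in> {0..n} \<and> k \<le> m}"
      using k p_def n_def by auto
    finally show ?thesis unfolding p_def .
  qed
  have "catalan_ab (a+b) b n
      = (\<Sum>k\<in>{0..N}. \<Sum>m\<in>{m. m \<in> {0..n} \<and> k \<le> m}. u k m)"
    unfolding catalan_ab_def
  proof (rule sum.cong)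
    show "{0..n-1} = {0..N}" by (simp add: n_def)
  next
    fix k assume "k \<in> {0..N}"
    thus "(1 / of_nat n) * of_nat (n choose k) * of_nat (n choose (k+1)) * (a+b)^(n-k) * b^k
      = (\<Sum>m\<in>{m. m \<in> {0..n} \<and> k \<le> m}. u k m)" by (rule step1)
  qed
  also have "\<dots> = (\<Sum>m\<in>{0..n}. \<Sum>k\<in>{k. k \<in> {0..N} \<and> k \<le> m}. u k m)"
    by (rule sum.swap_restrict) simp_all
  also have "\<dots> = (\<Sum>m\<in>{0..n}. of_nat ((n+m) choose (2*m)) * of_nat (catalan m) * a^(n-m) * b^m)"
  proof (rule sum.cong)
    fix m assume "m \<in> {0..n}"
    hence mn: "m \<le> Suc N" by (simp add: n_def)
    define S where "S = (\<Sum>k\<in>{k. k \<in> {0..N} \<and> k \<le> m}. (Suc N choose k) * (Suc N choose Suc k) * ((Suc N - k) choose (m - k)))"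
    have L: "S = Suc N * (((Suc N + m) choose (2*m)) * catalan m)" unfolding S_def using LB[OF mn] by (simp only: mult.assoc)
    have "(\<Sum>k\<in>{k. k \<in> {0..N} \<and> k \<le> m}. u k m) = (1 / of_nat n) * of_nat S * a^(n-m) * b^m"
      unfolding u_def S_def of_nat_sum n_def by (simp add: sum_distrib_right sum_distrib_left)
    also have "\<dots> = of_nat ((n+m) choose (2*m)) * of_nat (catalan m) * a^(n-m) * b^m"
      unfolding L n_def of_nat_mult by (simp del: of_nat_Suc)
    finally show "(\<Sum>k\<in>{k. k \<in> {0..N} \<and> k \<le> m}. u k m) = of_nat ((n+m) choose (2*m)) * of_nat (catalan m) * a^(n-m) * b^m" .
  qed simp
  also have "\<dots> = schroder_ab a b n" unfolding schroder_ab_def by simp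
  finally show ?thesis unfolding n_def by simp
qed

theorem theorem1p3:
  fixes a b :: complex and n :: nat
  assumes "n \<ge> 1"
  shows "catalan_ab a b n = a * motzkin_ab (a + b) (a * b) (n - 1)
       \<and> b * schroder_ab a b n = (a + b) * catalan_ab b (a + b) n
       \<and> schroder_ab a b n = (a + b) * motzkin_ab (a + 2*b) (a*b + b^2) (n - 1)"
proof -
  obtain N where n: "n = Suc N" using assms by (cases n) auto
  have e1: "a + b + b = a + 2*b" "(a+b)*b = a*b + b^2" "b + (a+b) = a + 2*b" "b*(a+b) = a*b+b^2"
    by (simp_all add: algebra_simps power2_eq_square)
  have S: "schroder_ab a b n = (a + b) * motzkin_ab (a + 2*b) (a*b + b^2) (n - 1)"
    unfolding n using ThB[of a b N] ThA[of "a+b" b N] e1 by simp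
  have C: "catalan_ab b (a+b) n = b * motzkin_ab (a + 2*b) (a*b + b^2) (n - 1)"
    unfolding n using ThA[of b "a+b" N] e1 by simp
  show ?thesis using ThA[of a b N] S C n by (simp add: ac_simps)
qed

end
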